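(* Let $(y_\beta)_{\beta>0}\subset\mathcal M$ be such that $(\beta y_\beta)$ converges vaguely on $[0,1)$ to some function $\alpha$ and $$L:=\lim_{\beta\to\infty}\int_0^1\beta y_\beta(s)ds<\infty.$$ Assume there exist $v_\beta\in[0,1)$ with $y_\beta(v_\beta)=1$ for all $\beta>0$ such that $\delta:=\lim_{\beta\to\infty}\beta(1-v_\beta)\in(0,\infty)$. Then $$\lim_{\beta\to\infty}\frac{\mathcal Q_\beta(y_\beta)}\beta=\frac12\Big((\xi'(1)+h^2)L-\int_0^1\xi''(q)\Big(\int_0^q\alpha(s)ds\Big)dq+\int_0^1\frac{dq}{L-\int_0^q\alpha(s)ds}\Big).$$
   Context: Let $(\gamma_p)_{p\ge2}$ be real with $\sum_{p\ge2}2^p\gamma_p^2<\infty$, $h\in\mathbb R$, $\xi(s)=\sum_{p\ge2}\gamma_p^2s^p$; for $\beta>0$, $\xi_\beta=\beta^2\xi$, $h_\beta=\beta h$. $\mathcal M$ is the set of distribution functions $x$ on $[0,1]$ with $x(\hat q)=1$ for some $\hat q<1$; for $x\in\mathcal M$, $\hat x(q)=\int_q^1x(s)ds$ and $\mathcal Q_\beta(x)=\frac12\big(\int_0^1(\xi'_\beta(q)+h_\beta^2)x(q)dq+\int_0^{\hat q}\frac{dq}{\hat x(q)}+\log(1-\hat q)\big)$, for any $\hat q<1$ with $x(\hat q)=1$ (independent of the choice). Vague convergence of $\beta y_\beta$ to $\alpha$ on $[0,1)$ means $\beta y_\beta(s)\to\alpha(s)$ at every continuity point $s\in[0,1)$ of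 $\alpha$. *)

theory Defs
  imports "HOL-Analysis.Analysis"
begin

definition xi :: "(nat \<Rightarrow> real) \<Rightarrow> real \<Rightarrow> real" where
  "xi \<gamma> s = (\<Sum>p. (if 2 \<le> p then (\<gamma> p)\<^sup>2 * s ^ p else 0))"

definition inM :: "(real \<Rightarrow> real) \<Rightarrow> bool" where
  "inM x \<longleftrightarrow> mono_on {0..1} x \<and> (\<forall>s\<in>{0..1}. 0 \<le> x s \<and> x s \<le> 1)
     \<and> (\<forall>s\<in>{0..<1}. continuous (at_right s) x) \<and> x 1 = 1
     \<and> (\<exists>q. 0 \<le> q \<and> q < 1 \<and> x q = 1)"

definition xhat :: "(real \<Rightarrow> real) \<Rightarrow> real \<Rightarrow> real" where
  "xhat x q = integral {q..1} x"

text \<open>Q_beta(x); the value does not depend on the choice of qhat, we pick one by SOME.\<close>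
definition Qbeta :: "(nat \<Rightarrow> real) \<Rightarrow> real \<Rightarrow> real \<Rightarrow> (real \<Rightarrow> real) \<Rightarrow> real" where
  "Qbeta \<gamma> h \<beta> x =
    (let qh = (SOME q. 0 \<le> q \<and> q < 1 \<and> x q = 1) in
     (1/2) * (integral {0..1} (\<lambda>q. (\<beta>\<^sup>2 * deriv (xi \<gamma>) q + (\<beta> * h)\<^sup>2) * x q)
              + integral {0..qh} (\<lambda>q. 1 / xhat x q) + ln (1 - qh)))"

definition vague_conv :: "(real \<Rightarrow> real \<Rightarrow> real) \<Rightarrow> (real \<Rightarrow> real) \<Rightarrow> bool" where
  "vague_conv y \<alpha> \<longleftrightarrow> (\<forall>s\<in>{0..<1}. continuous (at s within {0..<1}) \<alpha> \<longrightarrow>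
       ((\<lambda>\<beta>. \<beta> * y \<beta> s) \<longlongrightarrow> \<alpha> s) at_top)"

end

theory Submission
  imports Defs "HOL-Real_Asymp.Real_Asymp"
begin


lemma integral_sub_combine:
  fixes g :: "real \<Rightarrow> real"
  assumes "g integrable_on {0..1}" "0 \<le> x" "x \<le> y" "y \<le> 1"
  shows "integral {0..y} g - integral {0..x} g = integral {x..y} g"
proof -
  have "g integrable_on {0..y}" using assms integrable_subinterval_real by fastforce
  from Henstock_Kurzweil_Integration.integral_combine[OF _ _ this, of x] assms show ?thesis by auto
qed

lemma ibp_key:
  fixes u u' f :: "real \<Rightarrow> real"
  assumes du: "\<And>t. t \<in> {0..1} \<Longrightarrow> (u has_real_derivative u' t) (at t)"
    and cu': "continuous_on {0..1} u'"
    and fi: "f integrable_on {0..1}" and f0: "\<And>t. t \<in> {0..1} \<Longrightarrow> 0 \<le> f t"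
  shows "integral {0..1} (\<lambda>t. u t * f t) = u 1 * integral {0..1} f - integral {0..1} (\<lambda>t. u' t * integral {0..t} f)"
proof -
  define F where "F t = integral {0..t} f" for t
  have Fc: "continuous_on {0..1} F" unfolding F_def by (rule indefinite_integral_continuous_1[OF fi])
  have cu: "continuous_on {0..1} u"
    using du by (meson DERIV_isCont continuous_at_imp_continuous_on)
  have ufi: "(\<lambda>t. u t * f t) integrable_on {0..1}"
  proof -
    have "(\<lambda>t. u t * f t) absolutely_integrable_on {0..1}"
    proof (rule absolutely_integrable_bounded_measurable_product_real)
      show "u \<in> borel_measurable (lebesgue_on {0..1})"
        by (rule continuous_imp_measurable_on_sets_lebesgue[OF cu]) auto
      show "bounded (u ` {0..1})" using compact_continuous_image[OF cu] compact_imp_bounded by auto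
      show "f absolutely_integrable_on {0..1}" using nonnegative_absolutely_integrable_1[OF fi] f0 by auto
    qed auto
    then show ?thesis using absolutely_integrable_on_def by blast
  qed
  have uFi: "(\<lambda>t. u' t * F t) integrable_on {0..1}"
    by (rule integrable_continuous_real) (intro continuous_on_mult cu' Fc)
  obtain M where M: "\<And>t. t \<in> {0..1} \<Longrightarrow> \<bar>u' t\<bar> \<le> M"
    using compact_continuous_image[OF cu'] compact_imp_bounded bounded_real by (metis compact_Icc image_eqI)
  have Fdiff: "F y - F x = integral {x..y} f" if "0 \<le> x" "x \<le> y" "y \<le> 1" for x y
    unfolding F_def using integral_sub_combine[OF fi that] .
  have Fmono: "F x \<le> F y" if "0 \<le> x" "x \<le> y" "y \<le> 1" for x y
    using Fdiff[OF that] integral_nonneg[of f "{x..y}"] f0 that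
      integrable_subinterval_real[OF fi, of x y] by fastforce
  define D where "D x = integral {0..x} (\<lambda>t. u t * f t) - u x * F x + integral {0..x} (\<lambda>t. u' t * F t)" for x
  have key: "\<bar>D y - D x\<bar> \<le> 2 * M * (y - x) * (F y - F x)" if xy: "0 \<le> x" "x \<le> y" "y \<le> 1" for x y
  proof -
    have sub: "{x..y} \<subseteq> {0..1}" using xy by auto
    have fi': "f integrable_on {x..y}" using integrable_subinterval_real[OF fi sub] .
    have ufi': "(\<lambda>t. u t * f t) integrable_on {x..y}" using integrable_subinterval_real[OF ufi sub] .
    have uFi': "(\<lambda>t. u' t * F t) integrable_on {x..y}" using integrable_subinterval_real[OF uFi sub] .
    have u'i: "u' integrable_on {x..y}" using integrable_continuous_real continuous_on_subset[OF cu' sub] by blast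
    have ftc: "integral {x..y} u' = u y - u x"
    proof -
      have "(u' has_integral u y - u x) {x..y}"
        by (rule fundamental_theorem_of_calculus) (use xy du sub in \<open>auto simp: has_real_derivative_iff_has_vector_derivative intro: has_vector_derivative_at_within\<close>)
      then show ?thesis by (rule integral_unique)
    qed
    have e1: "integral {x..y} (\<lambda>t. (u t - u y) * f t) = integral {x..y} (\<lambda>t. u t * f t) - u y * (F y - F x)"
    proof -
      have "integral {x..y} (\<lambda>t. (u t - u y) * f t) = integral {x..y} (\<lambda>t. u t * f t - u y * f t)"
        by (simp add: algebra_simps)
      also have "\<dots> = integral {x..y} (\<lambda>t. u t * f t) - integral {x..y} (\<lambda>t. u y * f t)"
        by (rule integral_diff[OF ufi']) (rule integrable_on_mult_right[OF fi'])
      finally show ?thesis using Fdiff[OF xy] by simp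
    qed
    have e2: "integral {x..y} (\<lambda>t. u' t * (F t - F x)) = integral {x..y} (\<lambda>t. u' t * F t) - F x * (u y - u x)"
    proof -
      have "integral {x..y} (\<lambda>t. u' t * (F t - F x)) = integral {x..y} (\<lambda>t. u' t * F t - u' t * F x)"
        by (simp add: algebra_simps)
      also have "\<dots> = integral {x..y} (\<lambda>t. u' t * F t) - integral {x..y} (\<lambda>t. u' t * F x)"
        by (rule integral_diff[OF uFi']) (rule integrable_on_mult_left[OF u'i])
      finally show ?thesis using ftc by simp
    qed
    have DD: "D y - D x = integral {x..y} (\<lambda>t. (u t - u y) * f t) + integral {x..y} (\<lambda>t. u' t * (F t - F x))"
      unfolding D_def e1 e2 using integral_sub_combine[OF ufi xy] integral_sub_combine[OF uFi xy]
      by (simp add: algebra_simps)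
    have b1: "\<bar>integral {x..y} (\<lambda>t. (u t - u y) * f t)\<bar> \<le> M * (y - x) * (F y - F x)"
    proof -
      have ub: "\<bar>u t - u y\<bar> \<le> M * (y - x)" if t: "t \<in> {x..y}" for t
      proof (cases "t < y")
        case True
        then obtain z where z: "t < z" "z < y" "u y - u t = (y - t) * u' z"
          using MVT2[of t y u u'] du t xy by (metis atLeastAtMost_iff order.trans)
        have "\<bar>u' z\<bar> \<le> M" using M z t xy by auto
        then have "\<bar>u y - u t\<bar> \<le> (y - t) * M" using z True by (simp add: abs_mult mult_left_mono)
        also have "\<dots> \<le> (y - x) * M" using t \<open>\<bar>u' z\<bar> \<le> M\<close> by (intro mult_right_mono) auto
        finally show ?thesis by (simp add: abs_minus_commute mult.commute)
      next
        case False
        then have "t = y" using t by auto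
        then show ?thesis using M[of 0] xy by (simp add: mult_nonneg_nonneg)
      qed
      have "\<bar>integral {x..y} (\<lambda>t. (u t - u y) * f t)\<bar> \<le> integral {x..y} (\<lambda>t. M * (y - x) * f t)"
      proof -
        have i1: "(\<lambda>t. (u t - u y) * f t) integrable_on {x..y}"
          unfolding left_diff_distrib by (intro integrable_diff ufi' integrable_on_mult_right fi')
        have "norm (integral {x..y} (\<lambda>t. (u t - u y) * f t)) \<le> integral {x..y} (\<lambda>t. M * (y - x) * f t)"
          by (rule integral_norm_bound_integral[OF i1])
             (use fi' ub f0 sub in \<open>auto simp: abs_mult intro!: mult_right_mono integrable_on_mult_right\<close>)
        then show ?thesis by simp
      qed
      also have "\<dots> = M * (y - x) * (F y - F x)" using Fdiff[OF xy] by simp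
      finally show ?thesis .
    qed
    have b2: "\<bar>integral {x..y} (\<lambda>t. u' t * (F t - F x))\<bar> \<le> M * (y - x) * (F y - F x)"
    proof -
      have i2: "(\<lambda>t. u' t * (F t - F x)) integrable_on {x..y}"
        unfolding right_diff_distrib by (intro integrable_diff uFi' integrable_on_mult_left u'i)
      have "norm (integral {x..y} (\<lambda>t. u' t * (F t - F x))) \<le> integral {x..y} (\<lambda>t. M * (F y - F x))"
      proof (rule integral_norm_bound_integral[OF i2])
        fix t assume t: "t \<in> {x..y}"
        have "0 \<le> F t - F x" "F t - F x \<le> F y - F x" using Fmono t xy by auto
        moreover have "\<bar>u' t\<bar> \<le> M" using M t sub by auto
        ultimately show "norm (u' t * (F t - F x)) \<le> M * (F y - F x)"
          by (simp add: abs_mult) (intro mult_mono, auto)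
      qed auto
      also have "\<dots> = M * (y - x) * (F y - F x)" using xy by simp
      finally show ?thesis by simp
    qed
    show ?thesis using DD b1 b2 by linarith
  qed
  have sym: "\<bar>D y - D x\<bar> \<le> 2 * M * \<bar>y - x\<bar> * \<bar>F y - F x\<bar>" if "x \<in> {0..1}" "y \<in> {0..1}" for x y
  proof (cases "x \<le> y")
    case True
    then show ?thesis using key[of x y] Fmono[of x y] that by auto
  next
    case False
    then show ?thesis using key[of y x] Fmono[of y x] that by (auto simp: abs_minus_commute)
  qed
  have der: "(D has_derivative (\<lambda>h. 0)) (at x within {0..1})" if x: "x \<in> {0..1}" for x
    unfolding has_derivative_iff_norm
  proof
    show "bounded_linear (\<lambda>h::real. 0::real)" by simp
    have ev: "eventually (\<lambda>y. y \<in> {0..1} \<and> y \<noteq> x) (at x within {0..1})"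
      by (simp add: eventually_at_filter)
    show "((\<lambda>y. norm (D y - D x - 0) / norm (y - x)) \<longlongrightarrow> 0) (at x within {0..1})"
    proof (rule Lim_null_comparison)
      show "\<forall>\<^sub>F y in at x within {0..1}. norm (norm (D y - D x - 0) / norm (y - x)) \<le> 2 * M * \<bar>F y - F x\<bar>"
      proof (rule eventually_mono[OF ev])
        fix y assume y: "y \<in> {0..1} \<and> y \<noteq> x"
        then have "\<bar>y - x\<bar> > 0" by auto
        then show "norm (norm (D y - D x - 0) / norm (y - x)) \<le> 2 * M * \<bar>F y - F x\<bar>"
          using sym[OF x, of y] y by (simp add: divide_le_eq algebra_simps)
      qed
      have "(F \<longlongrightarrow> F x) (at x within {0..1})" using Fc x by (simp add: continuous_on_def)
      then have "((\<lambda>y. 2 * M * \<bar>F y - F x\<bar>) \<longlongrightarrow> 2 * M * \<bar>F x - F x\<bar>) (at x within {0..1})"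
        by (intro tendsto_intros)
      then show "((\<lambda>y. 2 * M * \<bar>F y - F x\<bar>) \<longlongrightarrow> 0) (at x within {0..1})" by simp
    qed
  qed
  have Dc: "continuous_on {0..1} D"
    using der has_derivative_continuous continuous_on_eq_continuous_within by blast
  have D0: "D 0 = 0" by (simp add: D_def F_def)
  have "D 1 = 0"
    by (rule has_derivative_zero_unique_strong_interval[of "{}" 0 1 D 0 1]) (use Dc D0 der in auto)
  then show ?thesis by (simp add: D_def F_def)
qed
lemma dc_at_top:
  fixes f :: "real \<Rightarrow> real \<Rightarrow> real" and g h :: "real \<Rightarrow> real"
  assumes N: "negligible N"
    and fi: "eventually (\<lambda>k. f k integrable_on S) at_top"
    and hi: "h integrable_on S"
    and bd: "eventually (\<lambda>k. \<forall>x\<in>S-N. norm (f k x) \<le> h x) at_top"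
    and lim: "\<And>x. x \<in> S-N \<Longrightarrow> ((\<lambda>k. f k x) \<longlongrightarrow> g x) at_top"
  shows "((\<lambda>k. integral S (f k)) \<longlongrightarrow> integral S g) at_top"
proof (rule tendsto_at_topI_sequentially)
  fix X :: "nat \<Rightarrow> real" assume X: "filterlim X at_top sequentially"
  have "eventually (\<lambda>k. f k integrable_on S \<and> (\<forall>x\<in>S-N. norm (f k x) \<le> h x)) at_top"
    using fi bd by (rule eventually_conj)
  then have "eventually (\<lambda>n. f (X n) integrable_on S \<and> (\<forall>x\<in>S-N. norm (f (X n) x) \<le> h x)) sequentially"
    using X unfolding filterlim_iff by blast
  then obtain K where K: "\<And>n. n \<ge> K \<Longrightarrow> f (X n) integrable_on S \<and> (\<forall>x\<in>S-N. norm (f (X n) x) \<le> h x)"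
    by (auto simp: eventually_sequentially)
  define f' where "f' n x = (if x \<in> N then 0 else f (X (n + K)) x)" for n x
  define h' where "h' x = (if x \<in> N then 0 else h x)" for x
  define g' where "g' x = (if x \<in> N then 0 else g x)" for x
  have f'i: "f' n integrable_on S" for n
    by (rule integrable_spike[OF conjunct1[OF K[of "n+K"]] N]) (auto simp: f'_def)
  have h'i: "h' integrable_on S"
    by (rule integrable_spike[OF hi N]) (auto simp: h'_def)
  have bd': "norm (f' n x) \<le> h' x" if "x \<in> S" for n x
    using K[of "n+K"] that by (auto simp: f'_def h'_def)
  have lim': "(\<lambda>n. f' n x) \<longlonglongrightarrow> g' x" if "x \<in> S" for x
  proof (cases "x \<in> N")
    case True then show ?thesis by (simp add: f'_def g'_def)
  next
    case False
    have "(\<lambda>n. f (X n) x) \<longlonglongrightarrow> g x"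
      using filterlim_compose[OF lim[of x] X] that False by auto
    then have "(\<lambda>n. f (X (n + K)) x) \<longlonglongrightarrow> g x"
      by (rule LIMSEQ_ignore_initial_segment)
    then show ?thesis using False by (simp add: f'_def g'_def)
  qed
  have "(\<lambda>n. integral S (f' n)) \<longlonglongrightarrow> integral S g'"
    by (rule dominated_convergence(2)[OF f'i h'i bd' lim'])
  moreover have "integral S (f' n) = integral S (f (X (n + K)))" for n
    by (rule integral_spike[OF N]) (auto simp: f'_def)
  moreover have "integral S g' = integral S g"
    by (rule integral_spike[OF N]) (auto simp: g'_def)
  ultimately have "(\<lambda>n. integral S (f (X (n + K)))) \<longlonglongrightarrow> integral S g" by simp
  then show "(\<lambda>n. integral S (f (X n))) \<longlonglongrightarrow> integral S g"
    by (rule LIMSEQ_offset)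
qed

definition PS :: "(nat \<Rightarrow> real) \<Rightarrow> real \<Rightarrow> real" where
  "PS c x = (\<Sum>n. c n * x ^ n)"

lemma PS_facts:
  assumes sc: "\<And>x. \<bar>x\<bar> < 2 \<Longrightarrow> summable (\<lambda>n. c n * x ^ n)"
  shows "\<And>x. \<bar>x\<bar> < 2 \<Longrightarrow> (PS c has_real_derivative PS (diffs c) x) (at x)"
    and "\<And>x. \<bar>x\<bar> < 2 \<Longrightarrow> summable (\<lambda>n. diffs c n * x ^ n)"
proof -
  fix x :: real assume x: "\<bar>x\<bar> < 2"
  define K where "K = (\<bar>x\<bar> + 2) / 2"
  have "\<bar>K\<bar> < 2" "norm x < norm K" using x by (auto simp: K_def)
  then show "(PS c has_real_derivative PS (diffs c) x) (at x)"
    unfolding PS_def[abs_def] using termdiffs_strong[OF sc] by blast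
next
  fix x :: real assume x: "\<bar>x\<bar> < 2"
  show "summable (\<lambda>n. diffs c n * x ^ n)"
    by (rule termdiff_converges[of x 2]) (use x sc in auto)
qed

definition cxi :: "(nat \<Rightarrow> real) \<Rightarrow> nat \<Rightarrow> real" where
  "cxi \<gamma> p = (if 2 \<le> p then (\<gamma> p)\<^sup>2 else 0)"

lemma xi_PS: "xi \<gamma> = PS (cxi \<gamma>)"
  by (auto simp: xi_def PS_def cxi_def fun_eq_iff intro!: suminf_cong)

lemma xi_derivs:
  assumes gamma: "summable (\<lambda>p. 2 ^ p * (\<gamma> p)\<^sup>2)"
  shows "\<And>t. \<bar>t\<bar> < 2 \<Longrightarrow> deriv (xi \<gamma>) t = PS (diffs (cxi \<gamma>)) t"
    and "\<And>t. \<bar>t\<bar> < 2 \<Longrightarrow> (deriv (xi \<gamma>) has_real_derivative PS (diffs (diffs (cxi \<gamma>))) t) (at t)"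
    and "\<And>t. \<bar>t\<bar> < 2 \<Longrightarrow> deriv (deriv (xi \<gamma>)) t = PS (diffs (diffs (cxi \<gamma>))) t"
    and "continuous_on {0..1} (deriv (deriv (xi \<gamma>)))"
proof -
  have s0: "summable (\<lambda>n. cxi \<gamma> n * x ^ n)" if "\<bar>x\<bar> < 2" for x
  proof (rule summable_comparison_test[OF _ gamma])
    show "\<exists>N. \<forall>n\<ge>N. norm (cxi \<gamma> n * x ^ n) \<le> 2 ^ n * (\<gamma> n)\<^sup>2"
    proof (intro exI allI impI)
      fix n :: nat
      have "\<bar>x\<bar> ^ n \<le> 2 ^ n" using that by (intro power_mono) auto
      then show "norm (cxi \<gamma> n * x ^ n) \<le> 2 ^ n * (\<gamma> n)\<^sup>2"
        by (auto simp: cxi_def abs_mult power_abs mult.commute intro: mult_right_mono)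
    qed
  qed
  have d1: "\<And>x. \<bar>x\<bar> < 2 \<Longrightarrow> (PS (cxi \<gamma>) has_real_derivative PS (diffs (cxi \<gamma>)) x) (at x)"
     "\<And>x. \<bar>x\<bar> < 2 \<Longrightarrow> summable (\<lambda>n. diffs (cxi \<gamma>) n * x ^ n)"
    using PS_facts[of "cxi \<gamma>"] s0 by blast+
  have d2: "\<And>x. \<bar>x\<bar> < 2 \<Longrightarrow> (PS (diffs (cxi \<gamma>)) has_real_derivative PS (diffs (diffs (cxi \<gamma>))) x) (at x)"
     "\<And>x. \<bar>x\<bar> < 2 \<Longrightarrow> summable (\<lambda>n. diffs (diffs (cxi \<gamma>)) n * x ^ n)"
    using PS_facts[of "diffs (cxi \<gamma>)"] d1(2) by blast+
  have d3: "\<And>x. \<bar>x\<bar> < 2 \<Longrightarrow> (PS (diffs (diffs (cxi \<gamma>))) has_real_derivative PS (diffs (diffs (diffs (cxi \<gamma>)))) x) (at x)"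
    using PS_facts[of "diffs (diffs (cxi \<gamma>))"] d2(2) by blast
  have D1: "deriv (xi \<gamma>) t = PS (diffs (cxi \<gamma>)) t" if "\<bar>t\<bar> < 2" for t
    using d1(1)[OF that] by (simp add: xi_PS DERIV_imp_deriv)
  then show "\<And>t. \<bar>t\<bar> < 2 \<Longrightarrow> deriv (xi \<gamma>) t = PS (diffs (cxi \<gamma>)) t" .
  have D2: "(deriv (xi \<gamma>) has_real_derivative PS (diffs (diffs (cxi \<gamma>))) t) (at t)" if t: "\<bar>t\<bar> < 2" for t
  proof (rule has_field_derivative_transform_within_open[OF d2(1)[OF t], of "{-2<..<2}"])
    show "open {-2<..<(2::real)}" by simp
    show "t \<in> {-2<..<2}" using t by auto
    show "\<And>x. x \<in> {-2<..<2} \<Longrightarrow> PS (diffs (cxi \<gamma>)) x = deriv (xi \<gamma>) x" using D1 by auto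
  qed
  then show "\<And>t. \<bar>t\<bar> < 2 \<Longrightarrow> (deriv (xi \<gamma>) has_real_derivative PS (diffs (diffs (cxi \<gamma>))) t) (at t)" .
  have D3: "deriv (deriv (xi \<gamma>)) t = PS (diffs (diffs (cxi \<gamma>))) t" if "\<bar>t\<bar> < 2" for t
    using D2[OF that] by (simp add: DERIV_imp_deriv)
  then show "\<And>t. \<bar>t\<bar> < 2 \<Longrightarrow> deriv (deriv (xi \<gamma>)) t = PS (diffs (diffs (cxi \<gamma>))) t" .
  have "continuous_on {0..1} (PS (diffs (diffs (cxi \<gamma>))))"
  proof (intro continuous_at_imp_continuous_on ballI)
    fix x :: real assume "x \<in> {0..1}"
    then have "\<bar>x\<bar> < 2" by auto
    then show "isCont (PS (diffs (diffs (cxi \<gamma>)))) x" using d3 DERIV_isCont by blast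
  qed
  then show "continuous_on {0..1} (deriv (deriv (xi \<gamma>)))"
    by (rule continuous_on_cong[THEN iffD1, rotated 2]) (auto simp: D3)
qed



lemma inM_mono: "inM x \<Longrightarrow> a \<in> {0..1} \<Longrightarrow> b \<in> {0..1} \<Longrightarrow> a \<le> b \<Longrightarrow> x a \<le> x b"
  unfolding inM_def mono_on_def by blast

lemma inM_bnd: "inM x \<Longrightarrow> s \<in> {0..1} \<Longrightarrow> 0 \<le> x s \<and> x s \<le> 1"
  unfolding inM_def by blast

lemma inM_int: "inM x \<Longrightarrow> x integrable_on {a..b} \<Longrightarrow> True" by simp

lemma inM_integrable: assumes "inM x" "0 \<le> a" "b \<le> 1" shows "x integrable_on {a..b}"
proof -
  have "mono_on {0..1} x" using assms unfolding inM_def by blast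
  then have "x integrable_on {0..1}" by (rule integrable_on_mono_on)
  then show ?thesis by (rule integrable_subinterval_real) (use assms in auto)
qed

lemma xhat_one:
  assumes x: "inM x" and a: "0 \<le> a" "a < 1" "x a = 1" and q: "a \<le> q" "q \<le> 1"
  shows "xhat x q = 1 - q"
proof -
  have "x t = 1" if "t \<in> {q..1}" for t
    using inM_mono[OF x, of a t] inM_bnd[OF x, of t] that a q by auto
  then have "xhat x q = integral {q..1} (\<lambda>_. 1::real)" unfolding xhat_def by (rule integral_cong)
  then show ?thesis using q by simp
qed

lemma xhat_anti:
  assumes x: "inM x" and "0 \<le> p" "p \<le> q" "q \<le> 1"
  shows "xhat x q \<le> xhat x p"
proof -
  have "integral {p..q} x + integral {q..1} x = integral {p..1} x"
    by (rule Henstock_Kurzweil_Integration.integral_combine) (use assms inM_integrable[OF x] in auto)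
  moreover have "0 \<le> integral {p..q} x"
    by (rule integral_nonneg) (use assms inM_integrable[OF x] inM_bnd[OF x] in auto)
  ultimately show ?thesis unfolding xhat_def by linarith
qed

lemma xhat_cont:
  assumes x: "inM x" shows "continuous_on {0..1} (xhat x)"
proof -
  have eq: "xhat x q = integral {0..1} x - integral {0..q} x" if "q \<in> {0..1}" for q
  proof -
    have "integral {0..q} x + integral {q..1} x = integral {0..1} x"
      by (rule Henstock_Kurzweil_Integration.integral_combine) (use that inM_integrable[OF x] in auto)
    then show ?thesis unfolding xhat_def by simp
  qed
  have "continuous_on {0..1} (\<lambda>q. integral {0..1} x - integral {0..q} x)"
    by (intro continuous_intros indefinite_integral_continuous_1 inM_integrable[OF x]) auto
  then show ?thesis by (rule continuous_on_cong[THEN iffD1, rotated 2]) (use eq in auto)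
qed

lemma xhat_pos:
  assumes x: "inM x" and a: "0 \<le> a" "a < 1" "x a = 1" and q: "0 \<le> q" "q \<le> a"
  shows "1 - a \<le> xhat x q"
  using xhat_anti[of x q a] xhat_one[OF x a, of a] x a q by auto

lemma G_step:
  assumes x: "inM x" and a: "0 \<le> a" "a < 1" "x a = 1" and b: "a \<le> b" "b < 1" "x b = 1"
  shows "integral {0..a} (\<lambda>q. 1 / xhat x q) + ln (1 - a) = integral {0..b} (\<lambda>q. 1 / xhat x q) + ln (1 - b)"
proof -
  have pos: "0 < xhat x q" if "q \<in> {0..b}" for q
    using xhat_pos[OF x _ b(2,3), of q] that a b by auto
  have ci: "(\<lambda>q. 1 / xhat x q) integrable_on {0..b}"
  proof (rule integrable_continuous_real)
    show "continuous_on {0..b} (\<lambda>q. 1 / xhat x q)"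
      using continuous_on_subset[OF xhat_cont[OF x], of "{0..b}"] b
      by (intro continuous_intros) (auto, metis pos atLeastAtMost_iff less_irrefl)
  qed
  have comb: "integral {0..a} (\<lambda>q. 1 / xhat x q) + integral {a..b} (\<lambda>q. 1 / xhat x q) = integral {0..b} (\<lambda>q. 1 / xhat x q)"
    by (rule Henstock_Kurzweil_Integration.integral_combine) (use a b ci in auto)
  have "integral {a..b} (\<lambda>q. 1 / xhat x q) = integral {a..b} (\<lambda>q. 1 / (1 - q))"
    by (rule integral_cong) (use xhat_one[OF x a] b in auto)
  also have "\<dots> = (- ln (1 - b)) - (- ln (1 - a))"
  proof (rule integral_unique, rule fundamental_theorem_of_calculus)
    show "a \<le> b" by fact
    fix t assume t: "t \<in> {a..b}"
    then have "t < 1" using b by auto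
    have "((\<lambda>q. - ln (1 - q)) has_real_derivative 1 / (1 - t)) (at t within {a..b})"
      using \<open>t < 1\<close> by (auto intro!: derivative_eq_intros simp: field_simps)
    then show "((\<lambda>q. - ln (1 - q)) has_vector_derivative 1 / (1 - t)) (at t within {a..b})"
      by (simp add: has_real_derivative_iff_has_vector_derivative)
  qed
  finally show ?thesis using comb by simp
qed

lemma G_indep:
  assumes x: "inM x" and a: "0 \<le> a" "a < 1" "x a = 1" and b: "0 \<le> b" "b < 1" "x b = 1"
  shows "integral {0..a} (\<lambda>q. 1 / xhat x q) + ln (1 - a) = integral {0..b} (\<lambda>q. 1 / xhat x q) + ln (1 - b)"
proof (cases "a \<le> b")
  case True then show ?thesis using G_step[OF x a True b(2,3)] by simp
next
  case False then show ?thesis using G_step[OF x b _ a(2,3)] by simp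
qed



lemma negl_countable: assumes "countable (S::real set)" shows "negligible S"
proof -
  have "S = \<Union> ((\<lambda>x. {x}) ` S)" by auto
  then show ?thesis using negligible_countable_Union[of "(\<lambda>x. {x}) ` S"] assms by auto
qed

theorem lemma5:
  fixes \<gamma> :: "nat \<Rightarrow> real" and h L \<delta> :: real
    and y :: "real \<Rightarrow> real \<Rightarrow> real" and \<alpha> v :: "real \<Rightarrow> real"
  assumes gamma: "summable (\<lambda>p. 2 ^ p * (\<gamma> p)\<^sup>2)"
    and yM: "\<forall>\<beta>>0. inM (y \<beta>)"
    and alpha_mono: "mono_on {0..<1} \<alpha>"
    and vague: "vague_conv y \<alpha>"
    and L: "((\<lambda>\<beta>. integral {0..1} (\<lambda>s. \<beta> * y \<beta> s)) \<longlongrightarrow> L) at_top"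
    and v: "\<forall>\<beta>>0. 0 \<le> v \<beta> \<and> v \<beta> < 1 \<and> y \<beta> (v \<beta>) = 1"
    and delta: "((\<lambda>\<beta>. \<beta> * (1 - v \<beta>)) \<longlongrightarrow> \<delta>) at_top" and "0 < \<delta>"
  shows "((\<lambda>\<beta>. Qbeta \<gamma> h \<beta> (y \<beta>) / \<beta>) \<longlongrightarrow>
     (1/2) * ((deriv (xi \<gamma>) 1 + h\<^sup>2) * L
        - integral {0..1} (\<lambda>q. deriv (deriv (xi \<gamma>)) q * integral {0..q} \<alpha>)
        + integral {0..1} (\<lambda>q. 1 / (L - integral {0..q} \<alpha>)))) at_top"
proof -
  define f where "f \<beta> s = \<beta> * y \<beta> s" for \<beta> s
  define I where "I \<beta> = integral {0..1} (f \<beta>)" for \<beta>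
  define F where "F \<beta> q = integral {0..q} (f \<beta>)" for \<beta> q
  define A where "A q = integral {0..q} \<alpha>" for q
  define X1 where "X1 = deriv (xi \<gamma>)"
  define X2 where "X2 = deriv (deriv (xi \<gamma>))"
  have IL: "(I \<longlongrightarrow> L) at_top" using L unfolding I_def[abs_def] f_def[abs_def] .
  have fint: "f \<beta> integrable_on {a..b}" if "\<beta> > 0" "0 \<le> a" "b \<le> 1" for \<beta> a b
    unfolding f_def using inM_integrable[of "y \<beta>" a b] yM that by (auto intro: integrable_on_mult_right)
  have f0: "0 \<le> f \<beta> s" if "\<beta> > 0" "s \<in> {0..1}" for \<beta> s
    unfolding f_def using inM_bnd[of "y \<beta>" s] yM that by auto
  have fmono: "f \<beta> a \<le> f \<beta> b" if "\<beta> > 0" "a \<in> {0..1}" "b \<in> {0..1}" "a \<le> b" for \<beta> a b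
    unfolding f_def using inM_mono[of "y \<beta>" a b] yM that by auto
  have IF: "I \<beta> - F \<beta> q = integral {q..1} (f \<beta>)" if "\<beta> > 0" "q \<in> {0..1}" for \<beta> q
    unfolding I_def F_def using integral_sub_combine[OF fint[OF that(1), of 0 1], of q 1] that by auto
  have Fnn: "0 \<le> F \<beta> q" if "\<beta> > 0" "q \<in> {0..1}" for \<beta> q
    unfolding F_def by (rule integral_nonneg) (use fint f0 that in auto)
  have FI: "F \<beta> q \<le> I \<beta>" if "\<beta> > 0" "q \<in> {0..1}" for \<beta> q
    using IF[OF that] integral_nonneg[of "f \<beta>" "{q..1}"] fint[OF that(1), of q 1] f0[OF that(1)] that by auto
  have Fc: "continuous_on {0..1} (F \<beta>)" if "\<beta> > 0" for \<beta>
    unfolding F_def by (rule indefinite_integral_continuous_1) (use fint that in auto)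
  have fbound: "f \<beta> s * (1 - s) \<le> I \<beta>" if "\<beta> > 0" "s \<in> {0..1}" for \<beta> s
  proof -
    have "f \<beta> s * (1 - s) = integral {s..1} (\<lambda>_. f \<beta> s)" using that by simp
    also have "\<dots> \<le> integral {s..1} (f \<beta>)"
      by (rule integral_le) (use fint[OF that(1), of s 1] fmono[OF that(1)] that in auto)
    also have "\<dots> = I \<beta> - F \<beta> s" using IF[OF that] by simp
    finally show ?thesis using Fnn[OF that] by simp
  qed
  have xhatF: "\<beta> * xhat (y \<beta>) q = I \<beta> - F \<beta> q" if "\<beta> > 0" "q \<in> {0..1}" for \<beta> q
    unfolding IF[OF that] xhat_def f_def by simp
  have X12: "(X1 has_real_derivative X2 t) (at t)" if "t \<in> {0..1}" for t
    using xi_derivs(2,3)[OF gamma, of t] that by (auto simp: X1_def X2_def)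
  have X2c: "continuous_on {0..1} X2" unfolding X2_def by (rule xi_derivs(4)[OF gamma])
  have decomp: "Qbeta \<gamma> h \<beta> (y \<beta>) / \<beta> = (1/2) * ((X1 1 + h\<^sup>2) * I \<beta> - integral {0..1} (\<lambda>q. X2 q * F \<beta> q))
      + (1/2) * (integral {0..1} (\<lambda>q. if q \<in> {..v \<beta>} then 1 / (I \<beta> - F \<beta> q) else 0) + ln (1 - v \<beta>) / \<beta>)"
    if \<beta>: "\<beta> > 0" for \<beta>
  proof -
    have M: "inM (y \<beta>)" using yM \<beta> by auto
    have vb: "0 \<le> v \<beta>" "v \<beta> < 1" "y \<beta> (v \<beta>) = 1" using v \<beta> by auto
    define qh where "qh = (SOME q. 0 \<le> q \<and> q < 1 \<and> y \<beta> q = 1)"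
    have qh: "0 \<le> qh \<and> qh < 1 \<and> y \<beta> qh = 1" unfolding qh_def
      by (rule someI_ex) (use M in \<open>auto simp: inM_def\<close>)
    have Q: "Qbeta \<gamma> h \<beta> (y \<beta>) = (1/2) * (integral {0..1} (\<lambda>q. (\<beta>\<^sup>2 * X1 q + (\<beta>*h)\<^sup>2) * y \<beta> q)
        + integral {0..qh} (\<lambda>q. 1 / xhat (y \<beta>) q) + ln (1 - qh))"
      unfolding Qbeta_def qh_def X1_def Let_def by simp
    have G: "integral {0..qh} (\<lambda>q. 1 / xhat (y \<beta>) q) + ln (1 - qh) = integral {0..v \<beta>} (\<lambda>q. 1 / xhat (y \<beta>) q) + ln (1 - v \<beta>)"
      by (rule G_indep[OF M]) (use qh vb in auto)
    have ibp: "integral {0..1} (\<lambda>q. (X1 q + h\<^sup>2) * f \<beta> q) = (X1 1 + h\<^sup>2) * I \<beta> - integral {0..1} (\<lambda>q. X2 q * F \<beta> q)"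
    proof -
      have "integral {0..1} (\<lambda>t. (X1 t + h\<^sup>2) * f \<beta> t) = (X1 1 + h\<^sup>2) * integral {0..1} (f \<beta>) - integral {0..1} (\<lambda>t. X2 t * integral {0..t} (f \<beta>))"
      proof (rule ibp_key[of "\<lambda>t. X1 t + h\<^sup>2" X2 "f \<beta>"])
        fix t :: real assume t: "t \<in> {0..1}"
        show "((\<lambda>t. X1 t + h\<^sup>2) has_real_derivative X2 t) (at t)"
          using DERIV_add[OF X12[OF t] DERIV_const] by simp
        show "0 \<le> f \<beta> t" using f0[OF \<beta> t] .
      qed (use X2c fint[OF \<beta>, of 0 1] in auto)
      then show ?thesis by (simp add: I_def F_def)
    qed
    have T1: "integral {0..1} (\<lambda>q. (\<beta>\<^sup>2 * X1 q + (\<beta>*h)\<^sup>2) * y \<beta> q) = \<beta> * ((X1 1 + h\<^sup>2) * I \<beta> - integral {0..1} (\<lambda>q. X2 q * F \<beta> q))"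
    proof -
      have "integral {0..1} (\<lambda>q. (\<beta>\<^sup>2 * X1 q + (\<beta>*h)\<^sup>2) * y \<beta> q) = integral {0..1} (\<lambda>q. \<beta> * ((X1 q + h\<^sup>2) * f \<beta> q))"
        by (rule integral_cong) (simp add: f_def power2_eq_square algebra_simps)
      also have "\<dots> = \<beta> * integral {0..1} (\<lambda>q. (X1 q + h\<^sup>2) * f \<beta> q)" by (rule integral_mult_right)
      finally show ?thesis using ibp by simp
    qed
    have T2: "integral {0..v \<beta>} (\<lambda>q. 1 / xhat (y \<beta>) q) / \<beta> = integral {0..1} (\<lambda>q. if q \<in> {..v \<beta>} then 1 / (I \<beta> - F \<beta> q) else 0)"
    proof -
      have "integral {0..1} (\<lambda>q. if q \<in> {..v \<beta>} then 1 / (I \<beta> - F \<beta> q) else 0) = integral ({..v \<beta>} \<inter> {0..1}) (\<lambda>q. 1 / (I \<beta> - F \<beta> q))"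
        by (rule integral_restrict_Int)
      also have "{..v \<beta>} \<inter> {0..1} = {0..v \<beta>}" using vb by auto
      also have "integral {0..v \<beta>} (\<lambda>q. 1 / (I \<beta> - F \<beta> q)) = integral {0..v \<beta>} (\<lambda>q. (1/\<beta>) * (1 / xhat (y \<beta>) q))"
      proof (rule integral_cong)
        fix q assume "q \<in> {0..v \<beta>}"
        then have "q \<in> {0..1}" using vb by auto
        then show "1 / (I \<beta> - F \<beta> q) = (1/\<beta>) * (1 / xhat (y \<beta>) q)"
          using xhatF[OF \<beta>, of q] by simp
      qed
      also have "\<dots> = (1/\<beta>) * integral {0..v \<beta>} (\<lambda>q. 1 / xhat (y \<beta>) q)" by (rule integral_mult_right)
      finally show ?thesis by simp
    qed
    have Q': "Qbeta \<gamma> h \<beta> (y \<beta>) = (1/2) * (\<beta> * ((X1 1 + h\<^sup>2) * I \<beta> - integral {0..1} (\<lambda>q. X2 q * F \<beta> q))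
        + (integral {0..v \<beta>} (\<lambda>q. 1 / xhat (y \<beta>) q) + ln (1 - v \<beta>)))"
      using Q G T1 by (simp add: add.assoc)
    have "Qbeta \<gamma> h \<beta> (y \<beta>) / \<beta> = (1/2) * ((X1 1 + h\<^sup>2) * I \<beta> - integral {0..1} (\<lambda>q. X2 q * F \<beta> q))
        + (1/2) * (integral {0..v \<beta>} (\<lambda>q. 1 / xhat (y \<beta>) q) / \<beta> + ln (1 - v \<beta>) / \<beta>)"
      unfolding Q' using \<beta> by (simp add: field_simps)
    then show ?thesis unfolding T2 .
  qed
  have ev0: "eventually (\<lambda>\<beta>::real. \<beta> > 0) at_top" by (simp add: eventually_gt_at_top)
  have evd: "eventually (\<lambda>\<beta>. \<beta> * (1 - v \<beta>) > \<delta>/2) at_top"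
    using order_tendstoD(1)[OF delta, of "\<delta>/2"] \<open>0 < \<delta>\<close> by auto
  have evI: "eventually (\<lambda>\<beta>. I \<beta> < L + 1) at_top"
    using order_tendstoD(2)[OF IL, of "L+1"] by auto
  have v1: "((\<lambda>\<beta>. 1 - v \<beta>) \<longlongrightarrow> 0) at_top"
  proof -
    have "((\<lambda>\<beta>. (\<beta> * (1 - v \<beta>)) * inverse \<beta>) \<longlongrightarrow> \<delta> * 0) at_top"
      by (intro tendsto_mult delta tendsto_inverse_0_at_top filterlim_ident)
    then have "((\<lambda>\<beta>. (\<beta> * (1 - v \<beta>)) * inverse \<beta>) \<longlongrightarrow> 0) at_top" by simp
    then show ?thesis
      by (rule Lim_transform_eventually) (use ev0 in \<open>eventually_elim, simp\<close>)
  qed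
  have evv: "eventually (\<lambda>\<beta>. q < v \<beta>) at_top" if "q < 1" for q
    using order_tendstoD(2)[OF v1, of "1-q"] that by auto
  define D\<alpha> where "D\<alpha> = {s \<in> {0..<1}. \<not> continuous (at s within {0..<1}) \<alpha>}"
  have negD: "negligible D\<alpha>" unfolding D\<alpha>_def
    by (rule negl_countable, rule mono_on_ctble_discont[OF alpha_mono])
  have FA: "((\<lambda>\<beta>. F \<beta> q) \<longlongrightarrow> A q) at_top" if q: "0 \<le> q" "q < 1" for q
    unfolding F_def A_def
  proof (rule dc_at_top[where N=D\<alpha> and h="\<lambda>_. (L+1)/(1-q)"])
    show "negligible D\<alpha>" by (rule negD)
    show "eventually (\<lambda>k. f k integrable_on {0..q}) at_top"
      using ev0 by eventually_elim (use fint q in auto)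
    show "(\<lambda>_. (L+1)/(1-q)) integrable_on {0..q}" by (rule integrable_const_ivl)
    show "eventually (\<lambda>k. \<forall>x\<in>{0..q}-D\<alpha>. norm (f k x) \<le> (L+1)/(1-q)) at_top"
      using ev0 evI
    proof eventually_elim
      case (elim k)
      show ?case
      proof
        fix x assume x: "x \<in> {0..q} - D\<alpha>"
        then have x01: "x \<in> {0..1}" using q by auto
        have "f k x * (1 - q) \<le> f k x * (1 - x)" using f0[OF elim(1) x01] x by (intro mult_left_mono) auto
        also have "\<dots> \<le> I k" by (rule fbound[OF elim(1) x01])
        finally have "f k x * (1 - q) \<le> L + 1" using elim(2) by simp
        then show "norm (f k x) \<le> (L+1)/(1-q)" using f0[OF elim(1) x01] q by (simp add: pos_le_divide_eq)
      qed
    qed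
    show "((\<lambda>k. f k x) \<longlongrightarrow> \<alpha> x) at_top" if "x \<in> {0..q} - D\<alpha>" for x
      using vague that q unfolding vague_conv_def D\<alpha>_def f_def by auto
  qed
  obtain M where M: "\<And>t. t \<in> {0..1} \<Longrightarrow> \<bar>X2 t\<bar> \<le> M"
    using compact_continuous_image[OF X2c] compact_imp_bounded bounded_real by (metis compact_Icc image_eqI)
  have I3: "((\<lambda>\<beta>. integral {0..1} (\<lambda>q. X2 q * F \<beta> q)) \<longlongrightarrow> integral {0..1} (\<lambda>q. X2 q * A q)) at_top"
  proof (rule dc_at_top[where N="{1}" and h="\<lambda>_. M * (L+1)"])
    show "eventually (\<lambda>k. (\<lambda>q. X2 q * F k q) integrable_on {0..1}) at_top"
      using ev0 by eventually_elim (intro integrable_continuous_real continuous_on_mult X2c Fc)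
    show "eventually (\<lambda>k. \<forall>x\<in>{0..1}-{1}. norm (X2 x * F k x) \<le> M * (L+1)) at_top"
      using ev0 evI
    proof eventually_elim
      case (elim k)
      show ?case
      proof
        fix x :: real assume x: "x \<in> {0..1} - {1}"
        then have x01: "x \<in> {0..1}" by auto
        have "\<bar>X2 x\<bar> * \<bar>F k x\<bar> \<le> M * (L+1)"
          using M[OF x01] Fnn[OF elim(1) x01] FI[OF elim(1) x01] elim(2)
          by (intro mult_mono) auto
        then show "norm (X2 x * F k x) \<le> M * (L+1)" by (simp add: abs_mult)
      qed
    qed
    show "((\<lambda>k. X2 x * F k x) \<longlongrightarrow> X2 x * A x) at_top" if "x \<in> {0..1} - {1}" for x
      using FA[of x] that by (intro tendsto_mult tendsto_const) auto
  qed auto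
  have lowb: "\<beta> * (1 - v \<beta>) \<le> I \<beta> - F \<beta> q" if "\<beta> > 0" "q \<in> {0..v \<beta>}" for \<beta> q
  proof -
    have "1 - v \<beta> \<le> xhat (y \<beta>) q"
      by (rule xhat_pos) (use yM v that in auto)
    then have "\<beta> * (1 - v \<beta>) \<le> \<beta> * xhat (y \<beta>) q" using that by simp
    also have "\<dots> = I \<beta> - F \<beta> q" using xhatF[of \<beta> q] v that by auto
    finally show ?thesis .
  qed
  have I4: "((\<lambda>\<beta>. integral {0..1} (\<lambda>q. if q \<in> {..v \<beta>} then 1 / (I \<beta> - F \<beta> q) else 0))
      \<longlongrightarrow> integral {0..1} (\<lambda>q. 1 / (L - A q))) at_top"
  proof (rule dc_at_top[where N="{1}" and h="\<lambda>_. 2/\<delta>"])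
    show "eventually (\<lambda>k. (\<lambda>q. if q \<in> {..v k} then 1 / (I k - F k q) else 0) integrable_on {0..1}) at_top"
      using ev0 evd
    proof eventually_elim
      case (elim k)
      have "{..v k} \<inter> {0..1} = {0..v k}" using v elim by auto
      moreover have "(\<lambda>q. 1 / (I k - F k q)) integrable_on {0..v k}"
      proof (rule integrable_continuous_real)
        have "continuous_on {0..v k} (F k)"
          by (rule continuous_on_subset[OF Fc[OF elim(1)]]) (use v elim(1) in auto)
        moreover have "I k - F k q \<noteq> 0" if "q \<in> {0..v k}" for q
          using lowb[OF elim(1) that] elim \<open>0 < \<delta>\<close> by auto
        ultimately show "continuous_on {0..v k} (\<lambda>q. 1 / (I k - F k q))"
          by (intro continuous_intros) auto
      qed
      ultimately show ?case by (simp only: integrable_restrict_Int)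
    qed
    show "eventually (\<lambda>k. \<forall>x\<in>{0..1}-{1}. norm (if x \<in> {..v k} then 1 / (I k - F k x) else 0) \<le> 2/\<delta>) at_top"
      using ev0 evd
    proof eventually_elim
      case (elim k)
      show ?case
      proof
        fix x :: real assume x: "x \<in> {0..1} - {1}"
        show "norm (if x \<in> {..v k} then 1 / (I k - F k x) else 0) \<le> 2/\<delta>"
        proof (cases "x \<in> {..v k}")
          case True
          then have "\<delta>/2 < I k - F k x" using lowb[OF elim(1), of x] x elim(2) by auto
          then have "1 / (I k - F k x) \<le> 1 / (\<delta>/2)" using \<open>0 < \<delta>\<close>
            by (intro divide_left_mono) auto
          moreover have "0 < I k - F k x" using \<open>\<delta>/2 < I k - F k x\<close> \<open>0 < \<delta>\<close> by linarith
          ultimately show ?thesis using True by simp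
        next
          case False then show ?thesis using \<open>0 < \<delta>\<close> by simp
        qed
      qed
    qed
    show "((\<lambda>k. if x \<in> {..v k} then 1 / (I k - F k x) else 0) \<longlongrightarrow> 1 / (L - A x)) at_top"
      if x: "x \<in> {0..1} - {1}" for x
    proof -
      have x1: "0 \<le> x" "x < 1" using x by auto
      have lim: "((\<lambda>k. I k - F k x) \<longlongrightarrow> L - A x) at_top" by (intro tendsto_diff IL FA x1)
      have "eventually (\<lambda>k. \<delta>/2 \<le> I k - F k x) at_top"
        using ev0 evd evv[OF x1(2)]
        by eventually_elim (use lowb x1 in \<open>smt (verit, best) atLeastAtMost_iff\<close>)
      then have "\<delta>/2 \<le> L - A x" by (rule tendsto_lowerbound[OF lim]) simp
      then have "L - A x \<noteq> 0" using \<open>0 < \<delta>\<close> by auto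
      then have "((\<lambda>k. 1 / (I k - F k x)) \<longlongrightarrow> 1 / (L - A x)) at_top"
        by (intro tendsto_divide tendsto_const lim)
      then show ?thesis
        by (rule Lim_transform_eventually) (use evv[OF x1(2)] in \<open>eventually_elim, auto\<close>)
    qed
  qed auto
  have L5: "((\<lambda>\<beta>. ln (1 - v \<beta>) / \<beta>) \<longlongrightarrow> 0) at_top"
  proof -
    have a: "((\<lambda>\<beta>. ln (\<beta> * (1 - v \<beta>)) * inverse \<beta>) \<longlongrightarrow> ln \<delta> * 0) at_top"
      using \<open>0 < \<delta>\<close> by (intro tendsto_mult tendsto_ln delta tendsto_inverse_0_at_top filterlim_ident) auto
    have b: "((\<lambda>x::real. ln x / x) \<longlongrightarrow> 0) at_top" by real_asymp
    have "((\<lambda>\<beta>. ln (\<beta> * (1 - v \<beta>)) * inverse \<beta> - ln \<beta> / \<beta>) \<longlongrightarrow> ln \<delta> * 0 - 0) at_top"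
      by (intro tendsto_diff a b)
    then have "((\<lambda>\<beta>. ln (\<beta> * (1 - v \<beta>)) * inverse \<beta> - ln \<beta> / \<beta>) \<longlongrightarrow> 0) at_top" by simp
    then show ?thesis
    proof (rule Lim_transform_eventually)
      show "\<forall>\<^sub>F x in at_top. ln (x * (1 - v x)) * inverse x - ln x / x = ln (1 - v x) / x"
        using ev0 evd
      proof eventually_elim
        case (elim x)
        then have "0 < x * (1 - v x)" using \<open>0 < \<delta>\<close> by linarith
        then have "1 - v x > 0" using elim(1) by (simp add: zero_less_mult_iff)
        then have "ln (x * (1 - v x)) = ln x + ln (1 - v x)" using elim by (simp add: ln_mult)
        then show ?case using elim by (simp add: field_simps)
      qed
    qed
  qed
  have "((\<lambda>\<beta>. (1/2) * ((X1 1 + h\<^sup>2) * I \<beta> - integral {0..1} (\<lambda>q. X2 q * F \<beta> q))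
      + (1/2) * (integral {0..1} (\<lambda>q. if q \<in> {..v \<beta>} then 1 / (I \<beta> - F \<beta> q) else 0) + ln (1 - v \<beta>) / \<beta>))
      \<longlongrightarrow> (1/2) * ((X1 1 + h\<^sup>2) * L - integral {0..1} (\<lambda>q. X2 q * A q))
      + (1/2) * (integral {0..1} (\<lambda>q. 1 / (L - A q)) + 0)) at_top"
    by (intro tendsto_intros IL I3 I4 L5)
  then have "((\<lambda>\<beta>. Qbeta \<gamma> h \<beta> (y \<beta>) / \<beta>) \<longlongrightarrow> (1/2) * ((X1 1 + h\<^sup>2) * L - integral {0..1} (\<lambda>q. X2 q * A q))
      + (1/2) * (integral {0..1} (\<lambda>q. 1 / (L - A q)) + 0)) at_top"
    by (rule Lim_transform_eventually) (use ev0 in \<open>eventually_elim, simp add: decomp\<close>)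
  then show ?thesis unfolding X1_def X2_def A_def by (simp add: algebra_simps)
qed
end
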